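(* Let $K=h^{-1/3}$ and $L=h^{-4/3}$. Let $x$ be a reference grid point in $\Omega=(-1,1)$ and $\phi$ a smooth function defined in a neighborhood of the grid. Then the scheme $F^{1D,e,\delta}$ is consistent with $F^{1D}$ and has accuracy \[ F^{1D,e,\delta}[\phi](x)-F^{1D}[\phi](x)=\mathcal O(h^{2/3}). \] Moreover, $F^{1D,e,\delta}$ is Lipschitz continuous with constant $C^h=h^{-4/3}+2h^{-10/3}$.
   Context: $F^{1D}[u]=(u_x^2u_{xx})^{1/3}$ (real cube root). With $A(p,q)=(p^2q)^{1/3}$, $A^\delta(p,q)=\operatorname{sgn}(q)\min(\lvert A(p,q)\rvert,K\lvert p\rvert,L\lvert q\rvert)$ ($\operatorname{sgn}(0)=0$), $A^{\delta,\pm}(p,q)=A^\delta(p^\pm,q^\pm)$ where $x^+=\max(x,0)$, $x^-=\min(x,0)$, the scheme on the uniform grid of spacing $h$ is $-F^{1D,e,\delta}[u]=A^{\delta,+}(\lvert u_x^h\rvert^+,-u_{xx}^h)+A^{\delta,-}(-\lvert u_x^h\rvert^-,-u_{xx}^h)$, where $\lvert u_x^h\rvert^+=\max\{\frac{u(x)-u(x+h)}h,\frac{u(x)-u(x-h)}h,0\}$, $-\lvert u_x^h\rvert^-=\min\{\frac{u(x)-u(x+h)}h,\frac{u(x)-u(x-h)}h,0\}$, $u_{xx}^h=\frac{u(x+h)-2u(x)+u(x-h)}{h^2}$. Writing a finite difference operator as $F^h[u](x)=F^h(x,u(x),u(x)-u(\cdot))$, it is Lipschitz continuous with constant $C$ if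 $\lvert F^h(x,r,v(\cdot))-F^h(x,s,w(\cdot))\rvert\le C\max(\lvert r-s\rvert,\lVert v-w\rVert_\infty)$ for all grid points $x$. Consistency with $F$ means $\lim_{h\to0,\,y\to x}F^h[\phi](y)=F[\phi](x)$ for smooth $\phi$. *)

theory Defs
  imports "HOL-Analysis.Analysis"
begin

definition smooth_on :: "real set \<Rightarrow> (real \<Rightarrow> real) \<Rightarrow> bool" where
  "smooth_on U f \<longleftrightarrow> (\<forall>n. ((deriv ^^ n) f) differentiable_on U)"

definition F1D :: "(real \<Rightarrow> real) \<Rightarrow> real \<Rightarrow> real" where
  "F1D u x = root 3 ((deriv u x)^2 * deriv (deriv u) x)"

definition Acube :: "real \<Rightarrow> real \<Rightarrow> real" where
  "Acube p q = root 3 (p^2 * q)"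

definition Adelta :: "real \<Rightarrow> real \<Rightarrow> real \<Rightarrow> real \<Rightarrow> real" where
  "Adelta K L p q = sgn q * min \<bar>Acube p q\<bar> (min (K * \<bar>p\<bar>) (L * \<bar>q\<bar>))"

definition pospart :: "real \<Rightarrow> real" where "pospart x = max x 0"
definition negpart :: "real \<Rightarrow> real" where "negpart x = min x 0"

definition Adelta_plus :: "real \<Rightarrow> real \<Rightarrow> real \<Rightarrow> real \<Rightarrow> real" where
  "Adelta_plus K L p q = Adelta K L (pospart p) (pospart q)"

definition Adelta_minus :: "real \<Rightarrow> real \<Rightarrow> real \<Rightarrow> real \<Rightarrow> real" where
  "Adelta_minus K L p q = Adelta K L (negpart p) (negpart q)"

definition uxh_plus :: "real \<Rightarrow> (real \<Rightarrow> real) \<Rightarrow> real \<Rightarrow> real" where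
  "uxh_plus h u x = max (max ((u x - u (x + h)) / h) ((u x - u (x - h)) / h)) 0"

definition neg_uxh_minus :: "real \<Rightarrow> (real \<Rightarrow> real) \<Rightarrow> real \<Rightarrow> real" where
  "neg_uxh_minus h u x = min (min ((u x - u (x + h)) / h) ((u x - u (x - h)) / h)) 0"

definition uxxh :: "real \<Rightarrow> (real \<Rightarrow> real) \<Rightarrow> real \<Rightarrow> real" where
  "uxxh h u x = (u (x + h) - 2 * u x + u (x - h)) / h^2"

definition F1D_scheme :: "real \<Rightarrow> real \<Rightarrow> real \<Rightarrow> (real \<Rightarrow> real) \<Rightarrow> real \<Rightarrow> real" where
  "F1D_scheme K L h u x =
     - (Adelta_plus K L (uxh_plus h u x) (- uxxh h u x)
        + Adelta_minus K L (neg_uxh_minus h u x) (- uxxh h u x))"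

definition F1De :: "real \<Rightarrow> (real \<Rightarrow> real) \<Rightarrow> real \<Rightarrow> real" where
  "F1De h u x = F1D_scheme (h powr (-1/3)) (h powr (-4/3)) h u x"

text \<open>Representation F^h(x, r, v(.)) with r = u(x), v(y) = u(x) - u(y).\<close>
definition scheme_rep :: "((real \<Rightarrow> real) \<Rightarrow> real \<Rightarrow> real) \<Rightarrow> real \<Rightarrow> real \<Rightarrow> (real \<Rightarrow> real) \<Rightarrow> real" where
  "scheme_rep G x r v = G (\<lambda>y. if y = x then r else r - v y) x"

text \<open>Lipschitz continuity with constant C on the uniform grid of spacing h through x,
  with the sup norm expressed via bounds M (so infinite sup norms are harmless).\<close>
definition scheme_lipschitz :: "real \<Rightarrow> ((real \<Rightarrow> real) \<Rightarrow> real \<Rightarrow> real) \<Rightarrow> real \<Rightarrow> bool" where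
  "scheme_lipschitz h G C \<longleftrightarrow>
     (\<forall>x r s v w M. \<bar>r - s\<bar> \<le> M \<and> (\<forall>k::int. \<bar>v (x + of_int k * h) - w (x + of_int k * h)\<bar> \<le> M)
        \<longrightarrow> \<bar>scheme_rep G x r v - scheme_rep G x s w\<bar> \<le> C * M)"

end

theory Submission
  imports Defs
begin


definition GG :: "real \<Rightarrow> real \<Rightarrow> real \<Rightarrow> real \<Rightarrow> real" where
  "GG K L a b = min (root 3 (a^2*b)) (min (K*a) (L*b))"

lemma root3_ab: assumes "0 \<le> a" "0 \<le> b"
  shows "root 3 (a^2*b) = (root 3 a)^2 * root 3 b"
  by (simp add: real_root_mult real_root_power)

lemma GG_nonneg: "0 \<le> K \<Longrightarrow> 0 \<le> L \<Longrightarrow> 0 \<le> a \<Longrightarrow> 0 \<le> b \<Longrightarrow> 0 \<le> GG K L a b"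
  unfolding GG_def by (simp add: real_root_ge_zero)

lemma GG_le_L: "GG K L a b \<le> L*b" unfolding GG_def by simp
lemma GG_le_K: "GG K L a b \<le> K*a" unfolding GG_def by simp

lemma GG_zero: "0 \<le> K \<Longrightarrow> 0 \<le> a \<Longrightarrow> GG K L a 0 = 0"
  unfolding GG_def by (simp add: min_def)

lemma GG_mono_a: assumes "0 \<le> K" "0 \<le> a1" "a1 \<le> a2" "0 \<le> b"
  shows "GG K L a1 b \<le> GG K L a2 b"
proof -
  have "a1^2*b \<le> a2^2*b" using assms by (intro mult_right_mono power_mono) auto
  hence "root 3 (a1^2*b) \<le> root 3 (a2^2*b)" by simp
  moreover have "K*a1 \<le> K*a2" using assms by (simp add: mult_left_mono)
  ultimately show ?thesis unfolding GG_def by linarith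
qed

lemma GG_mono_b: assumes "0 \<le> L" "0 \<le> b1" "b1 \<le> b2"
  shows "GG K L a b1 \<le> GG K L a b2"
proof -
  have "a^2*b1 \<le> a^2*b2" using assms by (intro mult_left_mono) auto
  hence "root 3 (a^2*b1) \<le> root 3 (a^2*b2)" by simp
  moreover have "L*b1 \<le> L*b2" using assms by (simp add: mult_left_mono)
  ultimately show ?thesis unfolding GG_def by linarith
qed

lemma GG_lip_a: assumes "0 \<le> K" "0 \<le> a1" "a1 \<le> a2" "0 \<le> b"
  shows "GG K L a2 b - GG K L a1 b \<le> K*(a2 - a1)"
proof -
  define s1 where "s1 = root 3 a1"
  define s2 where "s2 = root 3 a2"
  define t where "t = root 3 b"
  have s1: "0 \<le> s1" "s1^3 = a1" using assms unfolding s1_def by (auto simp: real_root_ge_zero)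
  have s2: "s1 \<le> s2" "s2^3 = a2" using assms unfolding s1_def s2_def by auto
  have t: "0 \<le> t" "t^3 = b" using assms unfolding t_def by (auto simp: real_root_ge_zero)
  have r1: "root 3 (a1^2*b) = s1^2*t" using assms unfolding s1_def t_def by (simp add: root3_ab)
  have r2: "root 3 (a2^2*b) = s2^2*t" using assms unfolding s2_def t_def by (simp add: root3_ab)
  have up1: "GG K L a2 b \<le> K*a2" "GG K L a2 b \<le> L*b" "GG K L a2 b \<le> s2^2*t"
    unfolding GG_def r2 by auto
  consider "GG K L a1 b = K*a1" | "GG K L a1 b = L*b" | "GG K L a1 b = s1^2*t" "s1^2*t \<le> K*a1"
    unfolding GG_def r1 min_def by (smt (verit))
  then show ?thesis
  proof cases
    case 1 then show ?thesis using up1 by (simp add: algebra_simps)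
  next
    case 2 then show ?thesis using up1 assms mult_left_mono[of a1 a2 K] by (simp add: algebra_simps)
  next
    case 3
    show ?thesis
    proof (cases "s1 = 0")
      case True
      then have "GG K L a1 b = K*a1" using 3 s1 by simp
      then show ?thesis using up1 by (simp add: algebra_simps)
    next
      case False
      then have "s1 > 0" using s1 by simp
      have "s1^2*t \<le> K * s1^2* s1" using 3 s1 by (simp add: power3_eq_cube power2_eq_square mult.assoc)
      then have tk: "t \<le> K * s1" using \<open>s1 > 0\<close> by (simp add: mult.assoc mult.left_commute)
      have "s2^2*t - s1^2*t = (s2^2 - s1^2)*t" by (simp add: algebra_simps)
      also have "\<dots> \<le> (s2^2 - s1^2)*(K * s1)"
        using tk s2 s1 by (intro mult_left_mono) (auto intro: power_mono)
      also have "\<dots> \<le> K*(s2^3 - s1^3)"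
      proof -
        have "(s2^2 - s1^2) * s1 \<le> s2^3 - s1^3"
        proof -
          have "(s2^2 - s1^2) * s1 = (s2 - s1)*((s2+s1) * s1)" by (simp add: algebra_simps power2_eq_square)
          also have "\<dots> \<le> (s2 - s1)*(s2^2 + s2* s1 + s1^2)"
            using s1 s2 by (intro mult_left_mono) (auto simp: algebra_simps power2_eq_square)
          also have "\<dots> = s2^3 - s1^3" by (simp add: algebra_simps power2_eq_square power3_eq_cube)
          finally show ?thesis .
        qed
        then show ?thesis using assms by (metis mult.assoc mult.commute mult_left_mono)
      qed
      finally show ?thesis using 3 up1 s1 s2 by simp
    qed
  qed
qed

lemma GG_lip_b: assumes "0 \<le> L" "0 \<le> a" "0 \<le> b1" "b1 \<le> b2"
  shows "GG K L a b2 - GG K L a b1 \<le> L*(b2 - b1)"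
proof -
  define s where "s = root 3 a"
  define t1 where "t1 = root 3 b1"
  define t2 where "t2 = root 3 b2"
  have s: "0 \<le> s" "s^3 = a" using assms unfolding s_def by (auto simp: real_root_ge_zero)
  have t1: "0 \<le> t1" "t1^3 = b1" using assms unfolding t1_def by (auto simp: real_root_ge_zero)
  have t2: "t1 \<le> t2" "t2^3 = b2" using assms unfolding t1_def t2_def by auto
  have r1: "root 3 (a^2*b1) = s^2*t1" using assms unfolding s_def t1_def by (simp add: root3_ab)
  have r2: "root 3 (a^2*b2) = s^2*t2" using assms unfolding s_def t2_def by (simp add: root3_ab)
  have up1: "GG K L a b2 \<le> K*a" "GG K L a b2 \<le> L*b2" "GG K L a b2 \<le> s^2*t2"
    unfolding GG_def r2 by auto
  consider "GG K L a b1 = K*a" | "GG K L a b1 = L*b1" | "GG K L a b1 = s^2*t1" "s^2*t1 \<le> L*b1"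
    unfolding GG_def r1 min_def by (smt (verit))
  then show ?thesis
  proof cases
    case 1 then show ?thesis using up1 assms mult_left_mono[of b1 b2 L] by (simp add: algebra_simps)
  next
    case 2 then show ?thesis using up1 by (simp add: algebra_simps)
  next
    case 3
    show ?thesis
    proof (cases "t1 = 0")
      case True
      then have "GG K L a b1 = L*b1" using 3 t1 by simp
      then show ?thesis using up1 by (simp add: algebra_simps)
    next
      case False
      then have "t1 > 0" using t1 by simp
      have "s^2*t1 \<le> (L*t1^2)*t1" using 3 t1 by (simp add: power3_eq_cube power2_eq_square mult.assoc)
      then have tk: "s^2 \<le> L*t1^2" using \<open>t1 > 0\<close> by simp
      have "s^2*t2 - s^2*t1 = s^2*(t2 - t1)" by (simp add: algebra_simps)
      also have "\<dots> \<le> (L*t1^2)*(t2 - t1)"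
        using tk t2 by (intro mult_right_mono) auto
      also have "\<dots> \<le> L*(t2^3 - t1^3)"
      proof -
        have "t1^2*(t2 - t1) \<le> t2^3 - t1^3"
        proof -
          have "t1^2*(t2 - t1) = (t2 - t1)*(t1^2)" by simp
          also have "\<dots> \<le> (t2 - t1)*(t2^2 + t2*t1 + t1^2)"
            using t1 t2 by (intro mult_left_mono) auto
          also have "\<dots> = t2^3 - t1^3" by (simp add: algebra_simps power2_eq_square power3_eq_cube)
          finally show ?thesis .
        qed
        then show ?thesis using assms by (metis mult.assoc mult_left_mono)
      qed
      finally show ?thesis using 3 up1 t1 t2 by simp
    qed
  qed
qed

lemma GG_abs_a: assumes "0 \<le> K" "0 \<le> a1" "0 \<le> a2" "0 \<le> b"
  shows "\<bar>GG K L a1 b - GG K L a2 b\<bar> \<le> K*\<bar>a1 - a2\<bar>"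
proof (cases "a1 \<le> a2")
  case True
  then show ?thesis using GG_lip_a[of K a1 a2 b L] GG_mono_a[of K a1 a2 b L] assms by simp
next
  case False
  then show ?thesis using GG_lip_a[of K a2 a1 b L] GG_mono_a[of K a2 a1 b L] assms by simp
qed

lemma GG_abs_b: assumes "0 \<le> L" "0 \<le> a" "0 \<le> b1" "0 \<le> b2"
  shows "\<bar>GG K L a b1 - GG K L a b2\<bar> \<le> L*\<bar>b1 - b2\<bar>"
proof (cases "b1 \<le> b2")
  case True
  then show ?thesis using GG_lip_b[of L a b1 b2 K] GG_mono_b[of L b1 b2 K a] assms by simp
next
  case False
  then show ?thesis using GG_lip_b[of L a b2 b1 K] GG_mono_b[of L b2 b1 K a] assms by simp
qed

lemma GG_lip: assumes "0 \<le> K" "0 \<le> L" "0 \<le> a1" "0 \<le> a2" "0 \<le> b1" "0 \<le> b2"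
  shows "\<bar>GG K L a1 b1 - GG K L a2 b2\<bar> \<le> K*\<bar>a1 - a2\<bar> + L*\<bar>b1 - b2\<bar>"
  using GG_abs_a[of K a1 a2 b1 L] GG_abs_b[of L a2 b1 b2 K] assms by linarith




lemma Adelta_pos: assumes "0 \<le> K" "0 \<le> L" "0 \<le> p" "0 \<le> q"
  shows "Adelta K L p q = GG K L p q"
proof (cases "q = 0")
  case True then show ?thesis using assms by (simp add: Adelta_def GG_zero)
next
  case False
  then have "q > 0" using assms by simp
  have "\<bar>Acube p q\<bar> = root 3 (p^2*q)" using assms unfolding Acube_def
    by (simp add: real_root_ge_zero)
  then show ?thesis using \<open>q > 0\<close> assms by (simp add: Adelta_def GG_def)
qed

lemma Adelta_neg: assumes "0 \<le> K" "0 \<le> L" "p \<le> 0" "q \<le> 0"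
  shows "Adelta K L p q = - GG K L (-p) (-q)"
proof (cases "q = 0")
  case True then show ?thesis using assms by (simp add: Adelta_def GG_zero)
next
  case False
  then have "q < 0" using assms by simp
  have "root 3 (p^2*q) = - root 3 ((-p)^2*(-q))" by (simp add: real_root_minus[symmetric])
  moreover have "0 \<le> root 3 ((-p)^2*(-q))" using assms by (intro real_root_ge_zero mult_nonneg_nonneg) auto
  moreover have "p^2*q \<le> 0" using assms by (simp add: mult_nonneg_nonpos)
  ultimately have "\<bar>Acube p q\<bar> = root 3 ((-p)^2*(-q))" unfolding Acube_def by simp
  then show ?thesis using \<open>q < 0\<close> assms by (simp add: Adelta_def GG_def)
qed

lemma scheme_GG: assumes "0 \<le> K" "0 \<le> L"
  shows "F1D_scheme K L h u x =
     GG K L (- neg_uxh_minus h u x) (max (uxxh h u x) 0)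
     - GG K L (uxh_plus h u x) (max (- uxxh h u x) 0)"
proof -
  have P: "0 \<le> uxh_plus h u x" unfolding uxh_plus_def by simp
  have N: "neg_uxh_minus h u x \<le> 0" unfolding neg_uxh_minus_def by simp
  have "Adelta_plus K L (uxh_plus h u x) (- uxxh h u x) = GG K L (uxh_plus h u x) (max (- uxxh h u x) 0)"
    unfolding Adelta_plus_def pospart_def using P assms
    by (simp add: Adelta_pos max_absorb1)
  moreover have "Adelta_minus K L (neg_uxh_minus h u x) (- uxxh h u x)
      = - GG K L (- neg_uxh_minus h u x) (max (uxxh h u x) 0)"
  proof -
    have "- min (- uxxh h u x) 0 = max (uxxh h u x) 0" by linarith
    then show ?thesis unfolding Adelta_minus_def negpart_def using N assms
      by (simp add: Adelta_neg min_absorb1)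
  qed
  ultimately show ?thesis unfolding F1D_scheme_def by simp
qed

lemma min_lip: "\<bar>a1 - a2\<bar> \<le> (e::real) \<Longrightarrow> \<bar>b1 - b2\<bar> \<le> e \<Longrightarrow> \<bar>min a1 b1 - min a2 b2\<bar> \<le> e"
  by (smt (verit) min_def)
lemma max_lip: "\<bar>a1 - a2\<bar> \<le> (e::real) \<Longrightarrow> \<bar>b1 - b2\<bar> \<le> e \<Longrightarrow> \<bar>max a1 b1 - max a2 b2\<bar> \<le> e"
  by (smt (verit) max_def)

definition Phi :: "real \<Rightarrow> real \<Rightarrow> real \<Rightarrow> real \<Rightarrow> real \<Rightarrow> real" where
  "Phi K L h \<alpha> \<beta> = GG K L (- min (min (\<alpha>/h) (\<beta>/h)) 0) (max (-(\<alpha>+\<beta>)/h^2) 0)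
        - GG K L (max (max (\<alpha>/h) (\<beta>/h)) 0) (max ((\<alpha>+\<beta>)/h^2) 0)"

lemma rep_Phi: assumes "0 < h" "0 \<le> K" "0 \<le> L"
  shows "scheme_rep (F1D_scheme K L h) x r v = Phi K L h (v (x+h)) (v (x-h))"
proof -
  let ?u = "\<lambda>y. if y = x then r else r - v y"
  have a: "?u (x+h) = r - v (x+h)" "?u (x-h) = r - v (x-h)" "?u x = r" using assms by auto
  have "uxxh h ?u x = -(v (x+h) + v (x-h))/h^2" unfolding uxxh_def a by (simp add: field_simps)
  moreover have "uxh_plus h ?u x = max (max (v (x+h)/h) (v (x-h)/h)) 0"
    unfolding uxh_plus_def a by simp
  moreover have "neg_uxh_minus h ?u x = min (min (v (x+h)/h) (v (x-h)/h)) 0"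
    unfolding neg_uxh_minus_def a by simp
  ultimately show ?thesis unfolding scheme_rep_def scheme_GG[OF assms(2,3)] Phi_def
    by (simp add: minus_divide_left add.commute)
qed

lemma Phi_lip: assumes "0 < h" "0 \<le> K" "0 \<le> L"
  and "\<bar>\<alpha>1 - \<alpha>2\<bar> \<le> M" "\<bar>\<beta>1 - \<beta>2\<bar> \<le> M"
  shows "\<bar>Phi K L h \<alpha>1 \<beta>1 - Phi K L h \<alpha>2 \<beta>2\<bar> \<le> (K/h + 2*L/h^2) * M"
proof -
  define A1 where "A1 = - min (min (\<alpha>1/h) (\<beta>1/h)) 0"
  define A2 where "A2 = - min (min (\<alpha>2/h) (\<beta>2/h)) 0"
  define P1 where "P1 = max (max (\<alpha>1/h) (\<beta>1/h)) 0"
  define P2 where "P2 = max (max (\<alpha>2/h) (\<beta>2/h)) 0"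
  define U1 where "U1 = -(\<alpha>1+\<beta>1)/h^2"
  define U2 where "U2 = -(\<alpha>2+\<beta>2)/h^2"
  have M0: "0 \<le> M" using assms by linarith
  have e1: "\<bar>\<alpha>1/h - \<alpha>2/h\<bar> \<le> M/h" "\<bar>\<beta>1/h - \<beta>2/h\<bar> \<le> M/h"
    using assms by (simp_all add: diff_divide_distrib[symmetric] divide_right_mono)
  have dA: "\<bar>A1 - A2\<bar> \<le> M/h" unfolding A1_def A2_def
    using min_lip[OF min_lip[OF e1], of 0 0] M0 assms by (simp add: abs_minus_commute)
  have dP: "\<bar>P1 - P2\<bar> \<le> M/h" unfolding P1_def P2_def
    using max_lip[OF max_lip[OF e1], of 0 0] M0 assms by simp
  have dU: "\<bar>U1 - U2\<bar> \<le> 2*M/h^2"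
  proof -
    have "U1 - U2 = -((\<alpha>1 - \<alpha>2) + (\<beta>1 - \<beta>2))/h^2" unfolding U1_def U2_def
      using assms by (simp add: field_simps)
    moreover have "\<bar>(\<alpha>1 - \<alpha>2) + (\<beta>1 - \<beta>2)\<bar> \<le> 2*M" using assms by linarith
    ultimately show ?thesis using assms by (simp add: divide_right_mono)
  qed
  have nn: "0 \<le> A1" "0 \<le> A2" "0 \<le> P1" "0 \<le> P2" unfolding A1_def A2_def P1_def P2_def by auto
  have Ph: "Phi K L h \<alpha>1 \<beta>1 = GG K L A1 (max U1 0) - GG K L P1 (max (-U1) 0)"
           "Phi K L h \<alpha>2 \<beta>2 = GG K L A2 (max U2 0) - GG K L P2 (max (-U2) 0)"
    unfolding Phi_def A1_def A2_def P1_def P2_def U1_def U2_def by (simp_all add: minus_divide_left add.commute)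
  have KM: "0 \<le> K*(M/h)" using assms M0 by simp
  have LM: "0 \<le> L*(2*M/h^2)" using assms M0 by simp
  have goal: "(K/h + 2*L/h^2) * M = K*(M/h) + L*(2*M/h^2)" by (simp add: field_simps)
  consider "0 \<le> U1" "0 \<le> U2" | "U1 \<le> 0" "U2 \<le> 0" | "0 \<le> U1" "U2 \<le> 0" | "U1 \<le> 0" "0 \<le> U2"
    by linarith
  then show ?thesis
  proof cases
    case 1
    then have "\<bar>Phi K L h \<alpha>1 \<beta>1 - Phi K L h \<alpha>2 \<beta>2\<bar> = \<bar>GG K L A1 U1 - GG K L A2 U2\<bar>"
      using Ph nn assms by (simp add: GG_zero max_absorb1 max_absorb2)
    also have "\<dots> \<le> K*\<bar>A1 - A2\<bar> + L*\<bar>U1 - U2\<bar>" using GG_lip nn 1 assms by simp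
    also have "\<dots> \<le> K*(M/h) + L*(2*M/h^2)"
      using dA dU assms by (intro add_mono mult_left_mono) auto
    finally show ?thesis using goal by simp
  next
    case 2
    then have "\<bar>Phi K L h \<alpha>1 \<beta>1 - Phi K L h \<alpha>2 \<beta>2\<bar> = \<bar>GG K L P1 (-U1) - GG K L P2 (-U2)\<bar>"
      using Ph nn assms by (simp add: GG_zero max_absorb1 max_absorb2 abs_minus_commute)
    also have "\<dots> \<le> K*\<bar>P1 - P2\<bar> + L*\<bar>(-U1) - (-U2)\<bar>" using GG_lip[of K L P1 P2 "-U1" "-U2"] nn 2 assms by simp
    also have "\<dots> \<le> K*(M/h) + L*(2*M/h^2)"
      using dP dU assms by (intro add_mono mult_left_mono) auto
    finally show ?thesis using goal by simp
  next
    case 3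
    then have "\<bar>Phi K L h \<alpha>1 \<beta>1 - Phi K L h \<alpha>2 \<beta>2\<bar> = \<bar>GG K L A1 U1 + GG K L P2 (-U2)\<bar>"
      using Ph nn assms by (simp add: GG_zero max_absorb1 max_absorb2)
    also have "\<dots> \<le> L*U1 + L*(-U2)"
      using GG_nonneg[of K L A1 U1] GG_nonneg[of K L P2 "-U2"] GG_le_L[of K L A1 U1] GG_le_L[of K L P2 "-U2"]
        nn 3 assms by simp
    also have "\<dots> = L*\<bar>U1 - U2\<bar>" using 3 by (simp add: algebra_simps)
    also have "\<dots> \<le> L*(2*M/h^2)" using dU assms by (intro mult_left_mono) auto
    finally show ?thesis using goal KM by simp
  next
    case 4
    then have "\<bar>Phi K L h \<alpha>1 \<beta>1 - Phi K L h \<alpha>2 \<beta>2\<bar> = \<bar>GG K L A2 U2 + GG K L P1 (-U1)\<bar>"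
      using Ph nn assms by (simp add: GG_zero max_absorb1 max_absorb2 abs_minus_commute)
    also have "\<dots> \<le> L*U2 + L*(-U1)"
      using GG_nonneg[of K L A2 U2] GG_nonneg[of K L P1 "-U1"] GG_le_L[of K L A2 U2] GG_le_L[of K L P1 "-U1"]
        nn 4 assms by simp
    also have "\<dots> = L*\<bar>U1 - U2\<bar>" using 4 by (simp add: algebra_simps)
    also have "\<dots> \<le> L*(2*M/h^2)" using dU assms by (intro mult_left_mono) auto
    finally show ?thesis using goal KM by simp
  qed
qed

lemma lipschitz_part: assumes "0 < h"
  shows "scheme_lipschitz h (F1De h) (h powr (-4/3) + 2 * h powr (-10/3))"
proof -
  let ?K = "h powr (-1/3)" and ?L = "h powr (-4/3)"
  have c: "h powr (-4/3) + 2 * h powr (-10/3) = ?K/h + 2*?L/h^2"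
  proof -
    have "h powr (-1/3 - 1) = ?K / h powr 1" by (rule powr_diff)
    then have 1: "?K/h = h powr (-4/3)" using assms by simp
    have "h powr (-4/3 - real 2) = ?L / h powr (real 2)" by (rule powr_diff)
    then have 2: "?L/h^2 = h powr (-10/3)" using assms by (simp add: powr_realpow)
    show ?thesis using 1 2 by simp
  qed
  have FF: "F1De h = F1D_scheme ?K ?L h" by (simp add: fun_eq_iff F1De_def)
  show ?thesis unfolding scheme_lipschitz_def FF c
  proof (intro allI impI)
    fix x r s :: real and v w :: "real \<Rightarrow> real" and M :: real
    assume H: "\<bar>r - s\<bar> \<le> M \<and> (\<forall>k::int. \<bar>v (x + of_int k * h) - w (x + of_int k * h)\<bar> \<le> M)"
    have "\<bar>v (x+h) - w (x+h)\<bar> \<le> M" using H[THEN conjunct2, rule_format, of 1] by simp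
    moreover have "\<bar>v (x-h) - w (x-h)\<bar> \<le> M" using H[THEN conjunct2, rule_format, of "-1"] by simp
    ultimately show "\<bar>scheme_rep (F1D_scheme ?K ?L h) x r v - scheme_rep (F1D_scheme ?K ?L h) x s w\<bar>
        \<le> (?K/h + 2*?L/h^2) * M"
      using assms by (simp add: rep_Phi Phi_lip)
  qed
qed




lemma GG_exact_eventually:
  assumes K: "filterlim Kf at_top F" and L: "filterlim Lf at_top F" and "0 \<le> \<alpha>" "0 \<le> \<beta>"
  shows "eventually (\<lambda>z. GG (Kf z) (Lf z) \<alpha> \<beta> = root 3 (\<alpha>^2*\<beta>)) F"
proof -
  let ?r = "root 3 (\<alpha>^2*\<beta>)"
  have r0: "0 \<le> ?r" using assms by (simp add: real_root_ge_zero)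
  have K0: "eventually (\<lambda>z. 0 \<le> Kf z) F" using K unfolding filterlim_at_top by blast
  have L0: "eventually (\<lambda>z. 0 \<le> Lf z) F" using L unfolding filterlim_at_top by blast
  show ?thesis
  proof (cases "\<alpha> = 0 \<or> \<beta> = 0")
    case True
    show ?thesis using K0 L0
      by eventually_elim (use True assms in \<open>auto simp: GG_def min_def\<close>)
  next
    case False
    then have p: "0 < \<alpha>" "0 < \<beta>" using assms by auto
    have K1: "eventually (\<lambda>z. ?r / \<alpha> \<le> Kf z) F" using K unfolding filterlim_at_top by blast
    have L1: "eventually (\<lambda>z. ?r / \<beta> \<le> Lf z) F" using L unfolding filterlim_at_top by blast
    show ?thesis using K1 L1
    proof eventually_elim
      case (elim z)
      have "?r \<le> Kf z * \<alpha>" using elim p by (simp add: divide_le_eq)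
      moreover have "?r \<le> Lf z * \<beta>" using elim p by (simp add: divide_le_eq)
      ultimately show ?case by (simp add: GG_def min_def mult.commute)
    qed
  qed
qed

lemma GG_tendsto:
  assumes K: "filterlim Kf at_top F" and L: "filterlim Lf at_top F"
    and A: "(A \<longlongrightarrow> \<alpha>) F" and B: "(B \<longlongrightarrow> \<beta>) F" and "0 \<le> \<alpha>" "0 \<le> \<beta>"
    and nn: "\<And>z. 0 \<le> A z" "\<And>z. 0 \<le> B z"
  shows "((\<lambda>z. GG (Kf z) (Lf z) (A z) (B z)) \<longlongrightarrow> root 3 (\<alpha>^2*\<beta>)) F"
proof -
  let ?r = "root 3 (\<alpha>^2*\<beta>)"
  have R: "((\<lambda>z. root 3 ((A z)^2 * B z)) \<longlongrightarrow> ?r) F" using A B by (intro tendsto_intros)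
  have K0: "eventually (\<lambda>z. 0 \<le> Kf z) F" using K unfolding filterlim_at_top by blast
  have L0: "eventually (\<lambda>z. 0 \<le> Lf z) F" using L unfolding filterlim_at_top by blast
  show ?thesis
  proof (cases "\<alpha> = 0 \<or> \<beta> = 0")
    case True
    then have r0: "?r = 0" by auto
    show ?thesis
    proof (rule tendsto_sandwich[of "\<lambda>_. 0" _ F "\<lambda>z. root 3 ((A z)^2 * B z)"])
      show "eventually (\<lambda>z. 0 \<le> GG (Kf z) (Lf z) (A z) (B z)) F"
        using K0 L0 by eventually_elim (use nn in \<open>simp add: GG_nonneg\<close>)
      show "eventually (\<lambda>z. GG (Kf z) (Lf z) (A z) (B z) \<le> root 3 ((A z)^2 * B z)) F"
        by (rule always_eventually) (simp add: GG_def)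
      show "((\<lambda>_. 0) \<longlongrightarrow> ?r) F" using True by auto
      show "((\<lambda>z. root 3 ((A z)^2 * B z)) \<longlongrightarrow> ?r) F" by (rule R)
    qed
  next
    case False
    then have p: "0 < \<alpha>" "0 < \<beta>" using assms by auto
    have KA: "filterlim (\<lambda>z. A z * Kf z) at_top F" by (rule filterlim_tendsto_pos_mult_at_top[OF A p(1) K])
    have LB: "filterlim (\<lambda>z. B z * Lf z) at_top F" by (rule filterlim_tendsto_pos_mult_at_top[OF B p(2) L])
    have e1: "eventually (\<lambda>z. ?r + 1 \<le> A z * Kf z) F" using KA unfolding filterlim_at_top by blast
    have e2: "eventually (\<lambda>z. ?r + 1 \<le> B z * Lf z) F" using LB unfolding filterlim_at_top by blast
    have e3: "eventually (\<lambda>z. root 3 ((A z)^2 * B z) < ?r + 1) F"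
      using order_tendstoD(2)[OF R, of "?r + 1"] by simp
    have "eventually (\<lambda>z. root 3 ((A z)^2 * B z) = GG (Kf z) (Lf z) (A z) (B z)) F"
      using e1 e2 e3 by eventually_elim (simp add: GG_def min_def mult.commute)
    then show ?thesis by (rule Lim_transform_eventually[OF R])
  qed
qed

lemma taylor_I:
  fixes D :: "nat \<Rightarrow> real \<Rightarrow> real"
  assumes der: "\<And>m t. -1 \<le> t \<Longrightarrow> t \<le> 1 \<Longrightarrow> DERIV (D m) t :> D (Suc m) t"
    and "0 < n" "-1 \<le> y" "y \<le> 1" "-1 \<le> z" "z \<le> 1" "z \<noteq> y"
  shows "\<exists>t. -1 \<le> t \<and> t \<le> 1 \<and> D 0 z = (\<Sum>m<n. D m y / fact m * (z - y)^m) + D n t / fact n * (z - y)^n"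
proof -
  obtain t where t: "(if z < y then z < t \<and> t < y else y < t \<and> t < z)"
    "D 0 z = (\<Sum>m<n. D m y / fact m * (z - y)^m) + D n t / fact n * (z - y)^n"
    using Taylor[of n D "D 0" "-1" 1 y z] assms by auto
  then have "-1 \<le> t \<and> t \<le> 1" using assms by (auto split: if_splits)
  then show ?thesis using t by blast
qed

lemma taylor_estimates:
  fixes D :: "nat \<Rightarrow> real \<Rightarrow> real"
  assumes der: "\<And>m t. -1 \<le> t \<Longrightarrow> t \<le> 1 \<Longrightarrow> DERIV (D m) t :> D (Suc m) t"
    and M2: "\<And>t. -1 \<le> t \<Longrightarrow> t \<le> 1 \<Longrightarrow> \<bar>D 2 t\<bar> \<le> M2"
    and M4: "\<And>t. -1 \<le> t \<Longrightarrow> t \<le> 1 \<Longrightarrow> \<bar>D 4 t\<bar> \<le> M4"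
    and h: "0 < h" "-1 \<le> y - h" "y + h \<le> 1"
  shows "\<bar>(D 0 y - D 0 (y + h))/h + D 1 y\<bar> \<le> M2*h/2"
    "\<bar>(D 0 y - D 0 (y - h))/h - D 1 y\<bar> \<le> M2*h/2"
    "\<bar>uxxh h (D 0) y - D 2 y\<bar> \<le> M4*h^2/12"
proof -
  have y: "-1 \<le> y" "y \<le> 1" using h by auto
  obtain t1 where t1: "-1 \<le> t1" "t1 \<le> 1" "D 0 (y+h) = D 0 y + D 1 y * h + D 2 t1 / 2 * h^2"
    using taylor_I[where D=D, OF der, of 2 y "y+h"] h y by (auto simp: eval_nat_numeral)
  obtain t2 where t2: "-1 \<le> t2" "t2 \<le> 1" "D 0 (y-h) = D 0 y - D 1 y * h + D 2 t2 / 2 * h^2"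
    using taylor_I[where D=D, OF der, of 2 y "y-h"] h y by (auto simp: eval_nat_numeral)
  obtain t3 where t3: "-1 \<le> t3" "t3 \<le> 1" "D 0 (y+h) = D 0 y + D 1 y * h + D 2 y / 2 * h^2
      + D 3 y / 6 * h^3 + D 4 t3 / 24 * h^4"
    using taylor_I[where D=D, OF der, of 4 y "y+h"] h y by (auto simp: eval_nat_numeral)
  obtain t4 where t4: "-1 \<le> t4" "t4 \<le> 1" "D 0 (y-h) = D 0 y - D 1 y * h + D 2 y / 2 * h^2
      - D 3 y / 6 * h^3 + D 4 t4 / 24 * h^4"
    using taylor_I[where D=D, OF der, of 4 y "y-h"] h y by (auto simp: eval_nat_numeral)
  have "(D 0 y - D 0 (y + h))/h + D 1 y = - D 2 t1 / 2 * h"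
    using t1 h by (simp add: field_simps power2_eq_square)
  then show "\<bar>(D 0 y - D 0 (y + h))/h + D 1 y\<bar> \<le> M2*h/2"
    using M2[OF t1(1,2)] h by (simp add: abs_mult mult_right_mono)
  have "(D 0 y - D 0 (y - h))/h - D 1 y = - D 2 t2 / 2 * h"
    using t2 h by (simp add: field_simps power2_eq_square)
  then show "\<bar>(D 0 y - D 0 (y - h))/h - D 1 y\<bar> \<le> M2*h/2"
    using M2[OF t2(1,2)] h by (simp add: abs_mult mult_right_mono)
  have e: "uxxh h (D 0) y - D 2 y = (D 4 t3 + D 4 t4) / 24 * h^2"
    unfolding uxxh_def t3(3) t4(3) using h by (simp add: field_simps power2_eq_square eval_nat_numeral)
  have b: "\<bar>D 4 t3 + D 4 t4\<bar> \<le> 2*M4" using M4[OF t3(1,2)] M4[OF t4(1,2)] by linarith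
  have "\<bar>uxxh h (D 0) y - D 2 y\<bar> = \<bar>D 4 t3 + D 4 t4\<bar> / 24 * h^2" unfolding e by (simp add: abs_mult)
  also have "\<dots> \<le> 2*M4 / 24 * h^2" using b by (intro mult_right_mono divide_right_mono) auto
  finally show "\<bar>uxxh h (D 0) y - D 2 y\<bar> \<le> M4*h^2/12" by simp
qed

lemma powr_lim_gen: assumes "0 < c"
  shows "filterlim (\<lambda>h::real. h powr (-c)) at_top (at_right 0)"
proof -
  have t: "((\<lambda>h::real. h powr c) \<longlongrightarrow> 0) (at_right 0)"
  proof (rule tendsto_zero_powrI[OF tendsto_ident_at tendsto_const _ assms])
    show "eventually (\<lambda>h::real. 0 \<le> h) (at_right 0)"
      using eventually_at_right_less[of "0::real"] by (rule eventually_mono) simp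
  qed
  have "filterlim (\<lambda>h::real. inverse (h powr c)) at_top (at_right 0)"
  proof (rule filterlim_inverse_at_top[OF t])
    show "eventually (\<lambda>h::real. 0 < h powr c) (at_right 0)"
      using eventually_at_right_less[of "0::real"] by (rule eventually_mono) simp
  qed
  then show ?thesis by (simp add: powr_minus)
qed

lemma powr_lim: "filterlim (\<lambda>h::real. h powr (-1/3)) at_top (at_right 0)"
  using powr_lim_gen[of "1/3"] by simp
lemma powr_lim2: "filterlim (\<lambda>h::real. h powr (-4/3)) at_top (at_right 0)"
  using powr_lim_gen[of "4/3"] by simp




lemma absdiff2: "(x::real) = p - q \<Longrightarrow> \<bar>p\<bar> \<le> e \<Longrightarrow> \<bar>q\<bar> \<le> e \<Longrightarrow> \<bar>x\<bar> \<le> 2*e"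
  by (simp add: abs_le_iff)

theorem mainTheorem8:
  fixes \<phi> :: "real \<Rightarrow> real" and U :: "real set" and x :: real
  assumes "open U" and "{-1..1} \<subseteq> U" and "smooth_on U \<phi>" and "x \<in> {-1<..<1}"
  shows "((\<lambda>(h, y). F1De h \<phi> y) \<longlongrightarrow> F1D \<phi> x) (at_right 0 \<times>\<^sub>F nhds x)
     \<and> (\<exists>C h0. h0 > 0 \<and> (\<forall>h. 0 < h \<and> h < h0 \<longrightarrow> \<bar>F1De h \<phi> x - F1D \<phi> x\<bar> \<le> C * h powr (2/3)))
     \<and> (\<forall>h>0. scheme_lipschitz h (F1De h) (h powr (-4/3) + 2 * h powr (-10/3)))"
proof -
  define D where "D = (\<lambda>n. (deriv^^n) \<phi>)"
  have derU: "DERIV (D m) t :> D (Suc m) t" if "t \<in> U" for m t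
  proof -
    have "(deriv^^m) \<phi> differentiable_on U" using assms(3) unfolding smooth_on_def by (rule spec)
    then have "(deriv^^m) \<phi> differentiable (at t within U)" using that unfolding differentiable_on_def by (rule bspec)
    then have "(deriv^^m) \<phi> differentiable at t" using at_within_open[OF that assms(1)] by simp
    then have "DERIV ((deriv^^m) \<phi>) t :> deriv ((deriv^^m) \<phi>) t"
      by (rule DERIV_deriv_iff_real_differentiable[THEN iffD2])
    then show ?thesis unfolding D_def by simp
  qed
  have der: "\<And>m t. -1 \<le> t \<Longrightarrow> t \<le> 1 \<Longrightarrow> DERIV (D m) t :> D (Suc m) t"
    using derU assms(2) by auto
  have cont: "\<And>m t. -1 \<le> t \<Longrightarrow> t \<le> 1 \<Longrightarrow> isCont (D m) t" using der DERIV_isCont by blast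
  have bnd: "\<exists>M. \<forall>t. -1 \<le> t \<and> t \<le> 1 \<longrightarrow> \<bar>D n t\<bar> \<le> M" for n
    using isCont_bounded[of "-1" 1 "\<lambda>t. \<bar>D n t\<bar>"] cont by (auto intro: isCont_rabs)
  obtain M2 where M2: "\<And>t. -1 \<le> t \<Longrightarrow> t \<le> 1 \<Longrightarrow> \<bar>D 2 t\<bar> \<le> M2" using bnd[of 2] by blast
  obtain M4 where M4: "\<And>t. -1 \<le> t \<Longrightarrow> t \<le> 1 \<Longrightarrow> \<bar>D 4 t\<bar> \<le> M4" using bnd[of 4] by blast
  have D0: "D 0 = \<phi>" and D1: "deriv \<phi> = D 1" and D2: "deriv (D 1) = D 2"
    by (simp_all add: D_def eval_nat_numeral)
  note est = taylor_estimates[where D=D, OF der M2 M4, unfolded D0]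
  define a where "a = D 1 x"
  define b where "b = D 2 x"
  have x: "-1 < x" "x < 1" using assms(4) by auto
  have target: "F1D \<phi> x = root 3 (\<bar>a\<bar>^2 * max b 0) - root 3 (\<bar>a\<bar>^2 * max (-b) 0)"
    unfolding F1D_def D1 D2 a_def[symmetric] b_def[symmetric]
    by (cases "b \<ge> 0") (auto simp: max_def real_root_minus[symmetric])
  define d1 where "d1 = (\<lambda>h y. (\<phi> y - \<phi> (y+h))/h)"
  define d2 where "d2 = (\<lambda>h y. (\<phi> y - \<phi> (y-h))/h)"
  let ?K = "\<lambda>h::real. h powr (-1/3)" and ?L = "\<lambda>h::real. h powr (-4/3)"
  have Fform: "F1De h \<phi> y = GG (?K h) (?L h) (- min (min (d1 h y) (d2 h y)) 0) (max (uxxh h \<phi> y) 0)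
      - GG (?K h) (?L h) (max (max (d1 h y) (d2 h y)) 0) (max (- uxxh h \<phi> y) 0)" for h y
    unfolding F1De_def d1_def d2_def
    by (simp add: scheme_GG uxh_plus_def neg_uxh_minus_def)
  define \<delta> where "\<delta> = (1 - \<bar>x\<bar>)/2"
  have \<delta>: "0 < \<delta>" using x unfolding \<delta>_def by auto
  let ?F = "at_right (0::real) \<times>\<^sub>F nhds x"
  have c1: "((\<lambda>z. F1De (fst z) \<phi> (snd z)) \<longlongrightarrow> F1D \<phi> x) ?F"
  proof -
    have e1: "eventually (\<lambda>h::real. 0 < h \<and> h < \<delta>) (at_right 0)"
      unfolding eventually_at_right_field using \<delta> by auto
    have e2: "eventually (\<lambda>y. \<bar>y - x\<bar> < \<delta>) (nhds x)"
      unfolding eventually_nhds_metric using \<delta> by (auto simp: dist_real_def)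
    have evd: "eventually (\<lambda>z. 0 < fst z \<and> -1 \<le> snd z - fst z \<and> snd z + fst z \<le> 1) ?F"
      using eventually_prodI[OF e1 e2] by eventually_elim (auto simp: \<delta>_def abs_if split: if_splits)
    have fst0: "((\<lambda>z. fst z) \<longlongrightarrow> 0) ?F"
      by (rule filterlim_compose[OF tendsto_ident_at filterlim_fst])
    have sndx: "((\<lambda>z. snd z) \<longlongrightarrow> x) ?F" by (rule filterlim_snd)
    have Dl: "((\<lambda>z. D n (snd z)) \<longlongrightarrow> D n x) ?F" for n
      using isCont_tendsto_compose[OF cont[of x n] sndx] x by simp
    have g0: "((\<lambda>z. M2 * fst z / 2) \<longlongrightarrow> 0) ?F" using tendsto_mult[OF tendsto_const fst0, of M2]
      by (simp add: tendsto_divide_zero)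
    have g1: "((\<lambda>z. M4 * (fst z)^2 / 12) \<longlongrightarrow> 0) ?F"
      using tendsto_mult[OF tendsto_const tendsto_power[OF fst0, of 2], of M4]
      by (simp add: tendsto_divide_zero)
    have l1: "((\<lambda>z. d1 (fst z) (snd z) + D 1 (snd z)) \<longlongrightarrow> 0) ?F"
      by (rule Lim_null_comparison[OF _ g0]) (use evd in \<open>eventually_elim, use est(1) in \<open>auto simp: d1_def\<close>\<close>)
    have l2: "((\<lambda>z. d2 (fst z) (snd z) - D 1 (snd z)) \<longlongrightarrow> 0) ?F"
      by (rule Lim_null_comparison[OF _ g0]) (use evd in \<open>eventually_elim, use est(2) in \<open>auto simp: d2_def\<close>\<close>)
    have l3: "((\<lambda>z. uxxh (fst z) \<phi> (snd z) - D 2 (snd z)) \<longlongrightarrow> 0) ?F"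
      by (rule Lim_null_comparison[OF _ g1]) (use evd in \<open>eventually_elim, use est(3) in auto\<close>)
    have d1l: "((\<lambda>z. d1 (fst z) (snd z)) \<longlongrightarrow> -a) ?F"
      using tendsto_diff[OF l1 Dl[of 1]] unfolding a_def by simp
    have d2l: "((\<lambda>z. d2 (fst z) (snd z)) \<longlongrightarrow> a) ?F"
      using tendsto_add[OF l2 Dl[of 1]] unfolding a_def by simp
    have ul: "((\<lambda>z. uxxh (fst z) \<phi> (snd z)) \<longlongrightarrow> b) ?F"
      using tendsto_add[OF l3 Dl[of 2]] unfolding b_def by simp
    have Kl: "filterlim (\<lambda>z. ?K (fst z)) at_top ?F" by (rule filterlim_compose[OF powr_lim filterlim_fst])
    have Ll: "filterlim (\<lambda>z. ?L (fst z)) at_top ?F" by (rule filterlim_compose[OF powr_lim2 filterlim_fst])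
    have Al: "((\<lambda>z. - min (min (d1 (fst z) (snd z)) (d2 (fst z) (snd z))) 0) \<longlongrightarrow> \<bar>a\<bar>) ?F"
    proof -
      have "((\<lambda>z. - min (min (d1 (fst z) (snd z)) (d2 (fst z) (snd z))) 0) \<longlongrightarrow> - min (min (-a) a) 0) ?F"
        by (intro tendsto_intros d1l d2l)
      moreover have "- min (min (-a) a) 0 = \<bar>a\<bar>" by auto
      ultimately show ?thesis by simp
    qed
    have Pl: "((\<lambda>z. max (max (d1 (fst z) (snd z)) (d2 (fst z) (snd z))) 0) \<longlongrightarrow> \<bar>a\<bar>) ?F"
    proof -
      have "((\<lambda>z. max (max (d1 (fst z) (snd z)) (d2 (fst z) (snd z))) 0) \<longlongrightarrow> max (max (-a) a) 0) ?F"
        by (intro tendsto_intros d1l d2l)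
      moreover have "max (max (-a) a) 0 = \<bar>a\<bar>" by auto
      ultimately show ?thesis by simp
    qed
    have u1: "((\<lambda>z. max (uxxh (fst z) \<phi> (snd z)) 0) \<longlongrightarrow> max b 0) ?F" by (intro tendsto_intros ul)
    have u2: "((\<lambda>z. max (- uxxh (fst z) \<phi> (snd z)) 0) \<longlongrightarrow> max (-b) 0) ?F" by (intro tendsto_intros ul)
    have T1: "((\<lambda>z. GG (?K (fst z)) (?L (fst z)) (- min (min (d1 (fst z) (snd z)) (d2 (fst z) (snd z))) 0)
        (max (uxxh (fst z) \<phi> (snd z)) 0)) \<longlongrightarrow> root 3 (\<bar>a\<bar>^2 * max b 0)) ?F"
      by (rule GG_tendsto[OF Kl Ll Al u1]) auto
    have T2: "((\<lambda>z. GG (?K (fst z)) (?L (fst z)) (max (max (d1 (fst z) (snd z)) (d2 (fst z) (snd z))) 0)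
        (max (- uxxh (fst z) \<phi> (snd z)) 0)) \<longlongrightarrow> root 3 (\<bar>a\<bar>^2 * max (-b) 0)) ?F"
      by (rule GG_tendsto[OF Kl Ll Pl u2]) auto
    show ?thesis using tendsto_diff[OF T1 T2] unfolding Fform target .
  qed
  have part1: "((\<lambda>(h, y). F1De h \<phi> y) \<longlongrightarrow> F1D \<phi> x) ?F"
    using c1 by (simp add: case_prod_beta')
  have part2: "\<exists>C h0. h0 > 0 \<and> (\<forall>h. 0 < h \<and> h < h0 \<longrightarrow> \<bar>F1De h \<phi> x - F1D \<phi> x\<bar> \<le> C * h powr (2/3))"
  proof -
    have ev: "eventually (\<lambda>h. (0 < h \<and> h < \<delta>) \<and> GG (?K h) (?L h) \<bar>a\<bar> (max b 0) = root 3 (\<bar>a\<bar>^2 * max b 0)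
        \<and> GG (?K h) (?L h) \<bar>a\<bar> (max (-b) 0) = root 3 (\<bar>a\<bar>^2 * max (-b) 0)) (at_right 0)"
    proof -
      have e1: "eventually (\<lambda>h::real. 0 < h \<and> h < \<delta>) (at_right 0)"
        unfolding eventually_at_right_field using \<delta> by auto
      have e2: "eventually (\<lambda>h. GG (?K h) (?L h) \<bar>a\<bar> (max b 0) = root 3 (\<bar>a\<bar>^2 * max b 0)) (at_right 0)"
        by (rule GG_exact_eventually[OF powr_lim powr_lim2]) auto
      have e3: "eventually (\<lambda>h. GG (?K h) (?L h) \<bar>a\<bar> (max (-b) 0) = root 3 (\<bar>a\<bar>^2 * max (-b) 0)) (at_right 0)"
        by (rule GG_exact_eventually[OF powr_lim powr_lim2]) auto
      show ?thesis using eventually_conj[OF e1 eventually_conj[OF e2 e3]] .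
    qed
    then obtain h0 where h0: "h0 > 0" and H: "\<And>h. h > 0 \<Longrightarrow> h < h0 \<Longrightarrow>
        (0 < h \<and> h < \<delta>) \<and> GG (?K h) (?L h) \<bar>a\<bar> (max b 0) = root 3 (\<bar>a\<bar>^2 * max b 0)
        \<and> GG (?K h) (?L h) \<bar>a\<bar> (max (-b) 0) = root 3 (\<bar>a\<bar>^2 * max (-b) 0)"
      unfolding eventually_at_right_field by auto
    have "\<bar>F1De h \<phi> x - F1D \<phi> x\<bar> \<le> (M2 + M4/6) * h powr (2/3)" if h: "0 < h" "h < h0" for h
    proof -
      note Hh = H[OF h]
      have dom: "0 < h" "-1 \<le> x - h" "x + h \<le> 1" using Hh x unfolding \<delta>_def by (auto simp: abs_if split: if_splits)
      have K0: "0 \<le> ?K h" and L0: "0 \<le> ?L h" by auto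
      define A where "A = - min (min (d1 h x) (d2 h x)) 0"
      define P where "P = max (max (d1 h x) (d2 h x)) 0"
      define u where "u = uxxh h \<phi> x"
      have ea: "\<bar>d1 h x - (-a)\<bar> \<le> M2*h/2" "\<bar>d2 h x - a\<bar> \<le> M2*h/2"
        using est(1)[of h x] est(2)[of h x] dom unfolding d1_def d2_def a_def by auto
      have eu: "\<bar>u - b\<bar> \<le> M4*h^2/12" using est(3)[of h x] dom unfolding u_def b_def by auto
      have eA: "\<bar>A - \<bar>a\<bar>\<bar> \<le> M2*h/2"
      proof -
        have "\<bar>min (min (d1 h x) (d2 h x)) 0 - min (min (-a) a) 0\<bar> \<le> M2*h/2"
          by (rule min_lip[OF min_lip[OF ea]]) (use ea(1) abs_ge_zero[of "d1 h x - (-a)"] in linarith)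
        moreover have "- min (min (-a) a) 0 = \<bar>a\<bar>" by auto
        ultimately show ?thesis unfolding A_def by (smt (verit))
      qed
      have eP: "\<bar>P - \<bar>a\<bar>\<bar> \<le> M2*h/2"
      proof -
        have "\<bar>max (max (d1 h x) (d2 h x)) 0 - max (max (-a) a) 0\<bar> \<le> M2*h/2"
          by (rule max_lip[OF max_lip[OF ea]]) (use ea(1) abs_ge_zero[of "d1 h x - (-a)"] in linarith)
        moreover have "max (max (-a) a) 0 = \<bar>a\<bar>" by auto
        ultimately show ?thesis unfolding P_def by simp
      qed
      have eu1: "\<bar>max u 0 - max b 0\<bar> \<le> M4*h^2/12" using max_lip[OF eu, of 0 0] eu abs_ge_zero[of "u - b"] by linarith
      have eu2: "\<bar>max (-u) 0 - max (-b) 0\<bar> \<le> M4*h^2/12" using max_lip[of "-u" "-b" "M4*h^2/12" 0 0] eu abs_ge_zero[of "u - b"] by (simp add: abs_minus_commute)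
      have A0: "0 \<le> A" and P0: "0 \<le> P" unfolding A_def P_def by auto
      have G1: "\<bar>GG (?K h) (?L h) A (max u 0) - GG (?K h) (?L h) \<bar>a\<bar> (max b 0)\<bar>
          \<le> ?K h * (M2*h/2) + ?L h * (M4*h^2/12)"
      proof -
        have "\<bar>GG (?K h) (?L h) A (max u 0) - GG (?K h) (?L h) \<bar>a\<bar> (max b 0)\<bar>
            \<le> ?K h * \<bar>A - \<bar>a\<bar>\<bar> + ?L h * \<bar>max u 0 - max b 0\<bar>"
          by (rule GG_lip[OF K0 L0 A0]) auto
        also have "\<dots> \<le> ?K h * (M2*h/2) + ?L h * (M4*h^2/12)"
          by (intro add_mono mult_left_mono K0 L0 eA eu1)
        finally show ?thesis .
      qed
      have G2: "\<bar>GG (?K h) (?L h) P (max (-u) 0) - GG (?K h) (?L h) \<bar>a\<bar> (max (-b) 0)\<bar>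
          \<le> ?K h * (M2*h/2) + ?L h * (M4*h^2/12)"
      proof -
        have "\<bar>GG (?K h) (?L h) P (max (-u) 0) - GG (?K h) (?L h) \<bar>a\<bar> (max (-b) 0)\<bar>
            \<le> ?K h * \<bar>P - \<bar>a\<bar>\<bar> + ?L h * \<bar>max (-u) 0 - max (-b) 0\<bar>"
          by (rule GG_lip[OF K0 L0 P0]) auto
        also have "\<dots> \<le> ?K h * (M2*h/2) + ?L h * (M4*h^2/12)"
          by (intro add_mono mult_left_mono K0 L0 eP eu2)
        finally show ?thesis .
      qed
      have "F1De h \<phi> x - F1D \<phi> x =
          (GG (?K h) (?L h) A (max u 0) - GG (?K h) (?L h) \<bar>a\<bar> (max b 0))
          - (GG (?K h) (?L h) P (max (-u) 0) - GG (?K h) (?L h) \<bar>a\<bar> (max (-b) 0))"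
        unfolding Fform target A_def P_def u_def using Hh by simp
      then have B: "\<bar>F1De h \<phi> x - F1D \<phi> x\<bar> \<le> 2 * (?K h * (M2*h/2) + ?L h * (M4*h^2/12))"
        by (rule absdiff2[OF _ G1 G2])
      have pK: "?K h * h = h powr (2/3)"
      proof -
        have "?K h * h powr 1 = h powr (-1/3 + 1)" by (simp only: powr_add)
        then show ?thesis using h by simp
      qed
      have pL: "?L h * h^2 = h powr (2/3)"
      proof -
        have "?L h * h powr (real 2) = h powr (-4/3 + real 2)" by (simp only: powr_add)
        then show ?thesis using h by (simp add: powr_realpow)
      qed
      have "2 * (?K h * (M2*h/2) + ?L h * (M4*h^2/12)) = M2 * (?K h * h) + M4/6 * (?L h * h^2)"
        by (simp add: algebra_simps)
      also have "\<dots> = (M2 + M4/6) * h powr (2/3)" unfolding pK pL by (simp add: algebra_simps)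
      finally show ?thesis using B by simp
    qed
    then show ?thesis using h0 by blast
  qed
  show ?thesis using part1 part2 lipschitz_part by simp
qed


end
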